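(* Let $k\ge2$ and $c\in\mathcal{S}_k^\beta\setminus\{\mathbf{0}\}$. Then $w_H(c)=L_\beta(k)-q^{\nu(c)}L_\beta(k-1)$, where $L_\beta(m)=q^{(s-1)(m-1)}\frac{q^m-1}{q-1}$.
   Context: Let $R$ be a finite commutative chain ring with maximal ideal $\langle\gamma\rangle$, nilpotency index $s$ and residue field $R/\langle\gamma\rangle\cong\mathbb{F}_q$. Fix coset representatives $T=\{e_0,\dots,e_{q-1}\}$ with $e_0=0,e_1=1$, ordered $e_0<\dots<e_{q-1}$; each $r\in R$ is uniquely $\sum_{i=0}^{s-1}r_i\gamma^i$, $r_i\in T$; order $R$ by $x>y$ iff $x_i>y_i$ in $T$ for the largest $i$ with $x_i\neq y_i$; list $R=\{\rho_0,\dots,\rho_{q^s-1}\}$ increasingly. $\mathbf{a}^{(m)}$ is the constant vector of length $m$. Define $G_1^\alpha=(\rho_0\ \cdots\ \rho_{q^s-1})$ and, for $k>1$, $G_k^\alpha$ as the matrix of $q^s$ column blocks, the $j$-th having first row $\boldsymbol{\rho_j}^{(q^{s(k-1)})}$ and $G_{k-1}^\alpha$ below. List $\langle\gamma\rangle$ increasingly as $a_0\gamma<\dots<a_{q^{s-1}-1}\gamma$. Define $G_1^\beta=(1)$ and, for $k>1$, $G_k^\beta$ as the matrix with column blocks: first a block with first row $\mathbf{1}^{(q^{s(k-1)})}$ and $G_{k-1}^\alpha$ below; then for each $j=0,\dots,q^{s-1}-1$ a block with first row the constant vector with entry $a_j\gamma$ and $G_{k-1}^\beta$ below. $\mathcal{S}_k^\beta$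 is the $R$-submodule generated by the rows of $G_k^\beta$. $w_H$ is the Hamming weight. Valuation: for $x\in R\setminus\{0\}$, $\nu(x)$ is the largest $m$ with $x=\gamma^m\beta$, $\beta$ a unit; $\nu(0)=\infty$; for $x\in R^n$, $\nu(x)=\min_i\nu(x_i)$. *)

theory Defs
  imports "HOL-Library.Extended_Nat" Complex_Main
begin

text \<open>Setting: the finite commutative chain ring R is the whole (finite) type 'a.
  gam is the generator of the maximal ideal, s its nilpotency index,
  T the ordered list of coset representatives e_0 < e_1 < ... < e_(q-1), so q = length T.\<close>

definition chain_ring_data :: "'a::{comm_ring_1,finite} \<Rightarrow> nat \<Rightarrow> 'a list \<Rightarrow> bool" where
  "chain_ring_data gam s T \<longleftrightarrow>
     \<not> gam dvd 1 \<and> (\<forall>x::'a. \<not> x dvd 1 \<longrightarrow> gam dvd x) \<and>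
     1 \<le> s \<and> gam ^ s = 0 \<and> gam ^ (s - 1) \<noteq> 0 \<and>
     distinct T \<and> 2 \<le> length T \<and> T ! 0 = 0 \<and> T ! 1 = 1 \<and>
     (\<forall>x::'a. \<exists>!t. t \<in> set T \<and> gam dvd (x - t))"

definition cr_digit :: "'a::comm_ring_1 \<Rightarrow> nat \<Rightarrow> 'a list \<Rightarrow> 'a \<Rightarrow> nat \<Rightarrow> 'a" where
  "cr_digit gam s T x = (THE d. (\<forall>i<s. d i \<in> set T) \<and> (\<forall>i\<ge>s. d i = 0) \<and>
                                 x = (\<Sum>i<s. d i * gam ^ i))"

definition T_less :: "'a list \<Rightarrow> 'a \<Rightarrow> 'a \<Rightarrow> bool" where
  "T_less T x y \<longleftrightarrow> (\<exists>a b. a < b \<and> b < length T \<and> T ! a = x \<and> T ! b = y)"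

definition cr_less :: "'a::comm_ring_1 \<Rightarrow> nat \<Rightarrow> 'a list \<Rightarrow> 'a \<Rightarrow> 'a \<Rightarrow> bool" where
  "cr_less gam s T x y \<longleftrightarrow>
     (\<exists>i<s. cr_digit gam s T x i \<noteq> cr_digit gam s T y i \<and>
            (\<forall>j. i < j \<and> j < s \<longrightarrow> cr_digit gam s T x j = cr_digit gam s T y j) \<and>
            T_less T (cr_digit gam s T x i) (cr_digit gam s T y i))"

definition cr_enum :: "'a::comm_ring_1 \<Rightarrow> nat \<Rightarrow> 'a list \<Rightarrow> 'a set \<Rightarrow> 'a list" where
  "cr_enum gam s T A = (THE xs. distinct xs \<and> set xs = A \<and> sorted_wrt (cr_less gam s T) xs)"

definition rho_list :: "'a::comm_ring_1 \<Rightarrow> nat \<Rightarrow> 'a list \<Rightarrow> 'a list" where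
  "rho_list gam s T = cr_enum gam s T UNIV"

definition gam_list :: "'a::comm_ring_1 \<Rightarrow> nat \<Rightarrow> 'a list \<Rightarrow> 'a list" where
  "gam_list gam s T = cr_enum gam s T {x. gam dvd x}"

text \<open>Matrices are represented as lists of their columns (each column a list of
  length k, entry i = row i).\<close>
fun G_alpha :: "'a::comm_ring_1 \<Rightarrow> nat \<Rightarrow> 'a list \<Rightarrow> nat \<Rightarrow> 'a list list" where
  "G_alpha gam s T 0 = []"
| "G_alpha gam s T (Suc 0) = map (\<lambda>r. [r]) (rho_list gam s T)"
| "G_alpha gam s T (Suc (Suc k)) =
     concat (map (\<lambda>r. map (\<lambda>col. r # col) (G_alpha gam s T (Suc k))) (rho_list gam s T))"

fun G_beta :: "'a::comm_ring_1 \<Rightarrow> nat \<Rightarrow> 'a list \<Rightarrow> nat \<Rightarrow> 'a list list" where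
  "G_beta gam s T 0 = []"
| "G_beta gam s T (Suc 0) = [[1]]"
| "G_beta gam s T (Suc (Suc k)) =
     map (\<lambda>col. 1 # col) (G_alpha gam s T (Suc k)) @
     concat (map (\<lambda>a. map (\<lambda>col. a # col) (G_beta gam s T (Suc k))) (gam_list gam s T))"

definition row_span :: "'a::comm_ring_1 list list \<Rightarrow> nat \<Rightarrow> 'a list set" where
  "row_span cols k = {map (\<lambda>col. \<Sum>i<k. l i * col ! i) cols | l. True}"

definition S_beta :: "'a::comm_ring_1 \<Rightarrow> nat \<Rightarrow> 'a list \<Rightarrow> nat \<Rightarrow> 'a list set" where
  "S_beta gam s T k = row_span (G_beta gam s T k) k"

definition w_H :: "'a::zero list \<Rightarrow> nat" where
  "w_H c = length (filter (\<lambda>x. x \<noteq> 0) c)"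

definition nu :: "'a::comm_ring_1 \<Rightarrow> 'a \<Rightarrow> enat" where
  "nu gam x = (if x = 0 then \<infinity> else enat (GREATEST m. \<exists>b. b dvd 1 \<and> x = gam ^ m * b))"

definition nu_vec :: "'a::comm_ring_1 \<Rightarrow> 'a list \<Rightarrow> enat" where
  "nu_vec gam c = Min (nu gam ` set c)"

definition L_beta :: "nat \<Rightarrow> nat \<Rightarrow> nat \<Rightarrow> real" where
  "L_beta q s m = real q ^ ((s - 1) * (m - 1)) * (real q ^ m - 1) / (real q - 1)"

end

theory Submission
  imports Defs
begin
locale cr =
  fixes gam :: "'a::{comm_ring_1,finite}" and s :: nat and T :: "'a list"
  assumes crd: "chain_ring_data gam s T"
begin

lemma ng: "\<not> gam dvd 1" using crd by (simp add: chain_ring_data_def)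
lemma nonunit_dvd: "\<not> x dvd 1 \<Longrightarrow> gam dvd x" using crd by (simp add: chain_ring_data_def)
lemma unit_ndvd: "x dvd 1 \<Longrightarrow> \<not> gam dvd x" using ng dvd_trans by blast
lemma s1: "1 \<le> s" using crd by (simp add: chain_ring_data_def)
lemma gs0: "gam ^ s = 0" using crd by (simp add: chain_ring_data_def)
lemma gs1: "gam ^ (s - 1) \<noteq> 0" using crd by (simp add: chain_ring_data_def)
lemma Tdist: "distinct T" using crd by (simp add: chain_ring_data_def)
lemma q2: "2 \<le> length T" using crd by (simp add: chain_ring_data_def)
lemma Tuniq: "\<exists>!t. t \<in> set T \<and> gam dvd (x - t)" using crd by (simp add: chain_ring_data_def)

lemma T_eq: "t \<in> set T \<Longrightarrow> t' \<in> set T \<Longrightarrow> gam dvd (t - t') \<Longrightarrow> t = t'"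
  using Tuniq[of t] by force

lemma pow_ne0: "m < s \<Longrightarrow> gam ^ m \<noteq> 0"
proof
  assume "m < s" "gam ^ m = 0"
  have "s - 1 = m + (s - 1 - m)" using \<open>m < s\<close> by simp
  hence "gam ^ (s - 1) = gam ^ m * gam ^ (s - 1 - m)" by (metis power_add)
  with \<open>gam ^ m = 0\<close> gs1 show False by simp
qed

lemma pow_ge: "s \<le> m \<Longrightarrow> gam ^ m = 0"
proof -
  assume "s \<le> m"
  hence "m = s + (m - s)" by simp
  hence "gam ^ m = gam ^ s * gam ^ (m - s)" by (metis power_add)
  thus ?thesis by (simp add: gs0)
qed

lemma K: assumes "m < s" "gam ^ Suc m dvd gam ^ m * u" shows "gam dvd u"
proof -
  obtain w where w: "gam ^ m * u = gam ^ Suc m * w" using assms(2) by (auto elim: dvdE)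
  hence "gam ^ m * (u - gam * w) = 0" by (simp add: algebra_simps)
  have "\<not> (u - gam * w) dvd 1"
  proof
    assume "(u - gam * w) dvd 1"
    then obtain v where v: "1 = (u - gam * w) * v" by (auto elim: dvdE)
    have "gam ^ m = gam ^ m * ((u - gam * w) * v)" using v by simp
    also have "\<dots> = (gam ^ m * (u - gam * w)) * v" by (simp add: mult.assoc)
    also have "\<dots> = 0" using \<open>gam ^ m * (u - gam * w) = 0\<close> by simp
    finally show False using pow_ne0[OF assms(1)] by simp
  qed
  hence "gam dvd (u - gam * w)" by (rule nonunit_dvd)
  moreover have "gam dvd gam * w" by simp
  ultimately have "gam dvd (u - gam * w) + gam * w" by (rule dvd_add)
  thus ?thesis by simp
qed


lemma Id_step: assumes "t < s" shows "card ({y. gam ^ t dvd y}) = length T * card ({y. gam ^ Suc t dvd y})"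
proof -
  let ?f = "\<lambda>(e, y). gam ^ t * e + y"
  have inj0: "e = e' \<and> y = y'" if e: "e \<in> set T" "e' \<in> set T" and y: "y \<in> {y. gam ^ Suc t dvd y}" "y' \<in> {y. gam ^ Suc t dvd y}"
      and eq: "gam ^ t * e + y = gam ^ t * e' + y'" for e y e' y'
  proof -
    have "gam ^ t * (e - e') = y' - y" using eq by (simp add: algebra_simps)
    moreover have "gam ^ Suc t dvd y' - y" using y by (auto intro: dvd_diff)
    ultimately have "gam ^ Suc t dvd gam ^ t * (e - e')" by simp
    hence "gam dvd (e - e')" by (rule K[OF assms])
    hence "e = e'" using T_eq e by blast
    thus "e = e' \<and> y = y'" using eq by simp
  qed
  have inj: "inj_on ?f (set T \<times> {y. gam ^ Suc t dvd y})"
    by (rule inj_onI) (use inj0 in auto)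
  have img: "?f ` (set T \<times> {y. gam ^ Suc t dvd y}) = {y. gam ^ t dvd y}"
  proof
    have a: "gam ^ t dvd gam ^ t * e + y" if "gam ^ Suc t dvd y" for e y
    proof -
      have "gam ^ t dvd gam ^ Suc t" by (simp add: le_imp_power_dvd)
      hence "gam ^ t dvd y" using that by (rule dvd_trans)
      thus ?thesis by (simp add: dvd_add)
    qed
    show "?f ` (set T \<times> {y. gam ^ Suc t dvd y}) \<subseteq> {y. gam ^ t dvd y}"
      using a by auto
    show "{y. gam ^ t dvd y} \<subseteq> ?f ` (set T \<times> {y. gam ^ Suc t dvd y})"
    proof
      fix z assume "z \<in> {y. gam ^ t dvd y}"
      then obtain x where x: "z = gam ^ t * x" by (auto simp: Id_def elim: dvdE)
      obtain e where e: "e \<in> set T" "gam dvd (x - e)" using Tuniq[of x] by blast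
      obtain w where w: "x - e = gam * w" using e(2) by (auto elim: dvdE)
      have "z = gam ^ t * e + gam ^ Suc t * w" using x w by (simp add: algebra_simps)
      moreover have "gam ^ Suc t * w \<in> {y. gam ^ Suc t dvd y}" by (simp add: Id_def)
      ultimately show "z \<in> ?f ` (set T \<times> {y. gam ^ Suc t dvd y})" using e(1) by force
    qed
  qed
  have "card ({y. gam ^ t dvd y}) = card (set T \<times> {y. gam ^ Suc t dvd y})" using card_image[OF inj] img by simp
  also have "\<dots> = length T * card ({y. gam ^ Suc t dvd y})" by (simp add: card_cartesian_product distinct_card[OF Tdist])
  finally show ?thesis .
qed

lemma card_Id: "t \<le> s \<Longrightarrow> card ({y. gam ^ t dvd y}) = length T ^ (s - t)"
proof (induction "s - t" arbitrary: t)
  case 0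
  hence "t = s" by simp
  hence "{y. gam ^ t dvd y} = {0}" using gs0 by auto
  thus ?case using 0 by simp
next
  case (Suc j)
  hence "t < s" by simp
  have "card ({y. gam ^ t dvd y}) = length T * card ({y. gam ^ Suc t dvd y})" by (rule Id_step[OF \<open>t < s\<close>])
  also have "card ({y. gam ^ Suc t dvd y}) = length T ^ (s - Suc t)"
  proof -
    have "j = s - Suc t" using Suc.hyps(2) by simp
    thus ?thesis using Suc.hyps(1)[of "Suc t"] \<open>t < s\<close> by (simp del: power_Suc)
  qed
  also have "length T * length T ^ (s - Suc t) = length T ^ (s - t)"
  proof -
    have "s - t = Suc (s - Suc t)" using \<open>t < s\<close> by simp
    thus ?thesis by simp
  qed
  finally show ?case .
qed

end

lemma sorted_unique:
  assumes asym: "\<And>x y. r x y \<Longrightarrow> r y x \<Longrightarrow> False"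
  shows "distinct xs \<Longrightarrow> distinct ys \<Longrightarrow> set xs = set ys \<Longrightarrow> sorted_wrt r xs \<Longrightarrow> sorted_wrt r ys \<Longrightarrow> xs = ys"
proof (induction xs arbitrary: ys)
  case Nil thus ?case by simp
next
  case (Cons x xs)
  then obtain y ys' where ys: "ys = y # ys'" by (cases ys) auto
  have "x = y"
  proof (rule ccontr)
    assume "x \<noteq> y"
    hence "x \<in> set ys'" "y \<in> set xs" using Cons.prems(3) ys by auto
    hence "r y x" "r x y" using Cons.prems(4,5) ys by auto
    thus False using asym by blast
  qed
  moreover have "set xs = set ys'"
  proof -
    have "set xs = set (x # xs) - {x}" using Cons.prems(1) by auto
    also have "\<dots> = set ys - {y}" using Cons.prems(3) \<open>x = y\<close> by simp
    also have "\<dots> = set ys'" using Cons.prems(2) ys by auto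
    finally show ?thesis .
  qed
  ultimately show ?case using Cons ys by auto
qed

lemma sorted_exists:
  assumes asym: "\<And>x y. r x y \<Longrightarrow> r y x \<Longrightarrow> False"
    and trans: "\<And>x y z. r x y \<Longrightarrow> r y z \<Longrightarrow> r x z"
    and total: "\<And>x y. x \<noteq> y \<Longrightarrow> r x y \<or> r y x"
  shows "finite A \<Longrightarrow> \<exists>xs. distinct xs \<and> set xs = A \<and> sorted_wrt r xs"
proof (induction A rule: finite_induct)
  case empty thus ?case by auto
next
  case (insert a F)
  then obtain xs where xs: "distinct xs" "set xs = F" "sorted_wrt r xs" by blast
  let ?ys = "filter (\<lambda>x. r x a) xs @ [a] @ filter (\<lambda>x. r a x) xs"
  have "distinct ?ys" using xs insert.hyps(2) asym by auto
  moreover have "set ?ys = insert a F" using xs insert.hyps(2) total by auto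
  moreover have "sorted_wrt r ?ys"
    using xs(3) trans by (auto simp: sorted_wrt_append sorted_wrt_filter)
  ultimately show ?case by blast
qed

context cr begin

lemma digits_exist: "\<exists>d. (\<forall>i<n. d i \<in> set T) \<and> (\<forall>i\<ge>n. d i = 0) \<and> (\<exists>y. x = (\<Sum>i<n. d i * gam ^ i) + gam ^ n * y)"
proof (induction n arbitrary: x)
  case 0
  show ?case by (rule exI[of _ "\<lambda>_. 0"]) simp
next
  case (Suc n)
  obtain t0 where t0: "t0 \<in> set T" "gam dvd (x - t0)" using Tuniq[of x] by blast
  obtain x1 where x1: "x - t0 = gam * x1" using t0(2) by (auto elim: dvdE)
  obtain d y where d: "\<forall>i<n. d i \<in> set T" "\<forall>i\<ge>n. d i = 0" "x1 = (\<Sum>i<n. d i * gam ^ i) + gam ^ n * y"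
    using Suc.IH[of x1] by blast
  define d' where "d' i = (case i of 0 \<Rightarrow> t0 | Suc j \<Rightarrow> d j)" for i
  have "(\<Sum>i<Suc n. d' i * gam ^ i) = d' 0 * gam ^ 0 + (\<Sum>i<n. d' (Suc i) * gam ^ (Suc i))"
    by (rule sum.lessThan_Suc_shift)
  also have "\<dots> = t0 + gam * (\<Sum>i<n. d i * gam ^ i)"
    by (simp add: d'_def sum_distrib_left algebra_simps)
  finally have s1: "(\<Sum>i<Suc n. d' i * gam ^ i) = t0 + gam * (\<Sum>i<n. d i * gam ^ i)" .
  have "x = t0 + gam * x1" using x1 by (simp add: algebra_simps)
  also have "\<dots> = (\<Sum>i<Suc n. d' i * gam ^ i) + gam ^ Suc n * y" using s1 d(3) by (simp add: algebra_simps)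
  finally have "x = (\<Sum>i<Suc n. d' i * gam ^ i) + gam ^ Suc n * y" .
  moreover have "\<forall>i<Suc n. d' i \<in> set T" using d(1) t0(1) by (auto simp: d'_def less_Suc_eq_0_disj)
  moreover have "\<forall>i\<ge>Suc n. d' i = 0" using d(2) by (auto simp: d'_def split: nat.split)
  ultimately show ?case by blast
qed

lemma digits_uniq:
  "n \<le> s \<Longrightarrow> \<forall>i<n. d i \<in> set T \<Longrightarrow> \<forall>i<n. e i \<in> set T \<Longrightarrow>
   gam ^ n dvd (\<Sum>i<n. d i * gam ^ i) - (\<Sum>i<n. e i * gam ^ i) \<Longrightarrow> \<forall>i<n. d i = e i"
proof (induction n)
  case 0 thus ?case by simp
next
  case (Suc n)
  have ns: "n < s" using Suc.prems(1) by simp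
  let ?D = "\<lambda>n. (\<Sum>i<n. d i * gam ^ i) - (\<Sum>i<n. e i * gam ^ i)"
  have split: "?D (Suc n) = ?D n + gam ^ n * (d n - e n)" by (simp add: algebra_simps)
  have "gam ^ n dvd gam ^ Suc n" by (simp add: le_imp_power_dvd)
  hence "gam ^ n dvd ?D (Suc n)" using Suc.prems(4) by (rule dvd_trans)
  hence dv: "gam ^ n dvd ?D (Suc n) - gam ^ n * (d n - e n)" by (simp add: dvd_diff)
  have eqD: "?D (Suc n) - gam ^ n * (d n - e n) = ?D n"
    unfolding split by (rule add_diff_cancel_right')
  have dvn: "gam ^ n dvd ?D n" by (subst eqD[symmetric]) (rule dv)
  have eqn: "\<forall>i<n. d i = e i"
  proof (rule Suc.IH)
    show "n \<le> s" using ns by simp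
    show "\<forall>i<n. d i \<in> set T" using Suc.prems(2) by simp
    show "\<forall>i<n. e i \<in> set T" using Suc.prems(3) by simp
    show "gam ^ n dvd ?D n" by (rule dvn)
  qed
  have "(\<Sum>i<n. d i * gam ^ i) = (\<Sum>i<n. e i * gam ^ i)"
    by (rule sum.cong) (simp_all add: eqn)
  hence Dn0: "?D n = 0" by (simp only: diff_self)
  have "?D (Suc n) = gam ^ n * (d n - e n)" unfolding split Dn0 by (rule add_0_left)
  hence "gam ^ Suc n dvd gam ^ n * (d n - e n)" using Suc.prems(4) by simp
  hence "gam dvd (d n - e n)" by (rule K[OF ns])
  moreover have "d n \<in> set T" "e n \<in> set T" using Suc.prems(2,3) by simp_all
  ultimately have "d n = e n" using T_eq by blast
  show ?case
  proof (intro allI impI)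
    fix i assume "i < Suc n"
    hence "i < n \<or> i = n" by auto
    thus "d i = e i" using eqn \<open>d n = e n\<close> by blast
  qed
qed

definition dprop :: "(nat \<Rightarrow> 'a) \<Rightarrow> 'a \<Rightarrow> bool" where
  "dprop d x \<longleftrightarrow> (\<forall>i<s. d i \<in> set T) \<and> (\<forall>i\<ge>s. d i = 0) \<and> x = (\<Sum>i<s. d i * gam ^ i)"

lemma dprop_ex1: "\<exists>!d. dprop d x"
proof -
  obtain d y where d: "\<forall>i<s. d i \<in> set T" "\<forall>i\<ge>s. d i = 0" "x = (\<Sum>i<s. d i * gam ^ i) + gam ^ s * y"
    using digits_exist[of s x] by blast
  hence dd: "dprop d x" by (simp add: dprop_def gs0)
  have "e = d" if "dprop e x" for e
  proof -
  from that have e: "\<forall>i<s. e i \<in> set T" "\<forall>i\<ge>s. e i = 0" "x = (\<Sum>i<s. e i * gam ^ i)" by (auto simp: dprop_def)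
  have "(\<Sum>i<s. e i * gam ^ i) - (\<Sum>i<s. d i * gam ^ i) = 0" using e(3) d(3) gs0 by simp
  hence dz: "gam ^ s dvd (\<Sum>i<s. e i * gam ^ i) - (\<Sum>i<s. d i * gam ^ i)" by simp
  have ed: "\<forall>i<s. e i = d i" by (rule digits_uniq[of s e d, OF _ e(1) d(1) dz]) simp
  show "e = d"
  proof (rule ext)
    fix i show "e i = d i"
    proof (cases "i < s")
      case True thus ?thesis using ed by blast
    next
      case False thus ?thesis using e(2) d(2) by simp
    qed
  qed
  qed
  thus ?thesis using dd by blast
qed

lemma cr_digit_prop: "dprop (cr_digit gam s T x) x"
proof -
  have "cr_digit gam s T x = (THE d. dprop d x)" unfolding cr_digit_def dprop_def by simp
  thus ?thesis using theI'[OF dprop_ex1[of x]] by simp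
qed

lemma cr_digit_T: "i < s \<Longrightarrow> cr_digit gam s T x i \<in> set T"
  using cr_digit_prop[of x] by (simp add: dprop_def)

lemma cr_digit_inj: assumes "\<forall>i<s. cr_digit gam s T x i = cr_digit gam s T y i" shows "x = y"
proof -
  have "x = (\<Sum>i<s. cr_digit gam s T x i * gam ^ i)" using cr_digit_prop[of x] by (simp add: dprop_def)
  also have "\<dots> = (\<Sum>i<s. cr_digit gam s T y i * gam ^ i)" using assms by simp
  also have "\<dots> = y" using cr_digit_prop[of y] by (simp add: dprop_def)
  finally show ?thesis .
qed

end

context cr begin
lemma T_idx: "i < length T \<Longrightarrow> j < length T \<Longrightarrow> T ! i = T ! j \<Longrightarrow> i = j"
  using nth_eq_iff_index_eq[OF Tdist] by blast

lemma T_less_asym: "T_less T x y \<Longrightarrow> T_less T y x \<Longrightarrow> False"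
proof -
  assume "T_less T x y" "T_less T y x"
  then obtain a b a' b' where ab: "a < b" "b < length T" "T ! a = x" "T ! b = y"
    and ab': "a' < b'" "b' < length T" "T ! a' = y" "T ! b' = x" unfolding T_less_def by blast
  have "b = a'" using T_idx[of b a'] ab ab' by simp
  moreover have "a = b'" using T_idx[of a b'] ab ab' by simp
  ultimately show False using ab(1) ab'(1) by simp
qed

lemma T_less_trans: "T_less T x y \<Longrightarrow> T_less T y z \<Longrightarrow> T_less T x z"
proof -
  assume "T_less T x y" "T_less T y z"
  then obtain a b a' b' where ab: "a < b" "b < length T" "T ! a = x" "T ! b = y"
    and ab': "a' < b'" "b' < length T" "T ! a' = y" "T ! b' = z" unfolding T_less_def by blast
  have "b = a'" using T_idx[of b a'] ab ab' by simp
  hence "a < b'" using ab(1) ab'(1) by simp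
  thus ?thesis unfolding T_less_def using ab ab' by blast
qed

lemma T_less_irrefl: "\<not> T_less T x x"
  using T_less_asym by blast

lemma T_less_total: "x \<in> set T \<Longrightarrow> y \<in> set T \<Longrightarrow> x \<noteq> y \<Longrightarrow> T_less T x y \<or> T_less T y x"
proof -
  assume "x \<in> set T" "y \<in> set T" "x \<noteq> y"
  then obtain a b where ab: "a < length T" "T ! a = x" "b < length T" "T ! b = y"
    unfolding in_set_conv_nth by blast
  hence "a \<noteq> b" using \<open>x \<noteq> y\<close> by blast
  thus ?thesis
  proof (cases "a < b")
    case True thus ?thesis unfolding T_less_def using ab by blast
  next
    case False hence "b < a" using \<open>a \<noteq> b\<close> by simp
    thus ?thesis unfolding T_less_def using ab by blast
  qed
qed

abbreviation "D \<equiv> cr_digit gam s T"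

lemma cr_less_asym: "cr_less gam s T x y \<Longrightarrow> cr_less gam s T y x \<Longrightarrow> False"
proof -
  assume a: "cr_less gam s T x y" "cr_less gam s T y x"
  obtain i where i: "i < s" "D x i \<noteq> D y i" "\<forall>j. i < j \<and> j < s \<longrightarrow> D x j = D y j" "T_less T (D x i) (D y i)"
    using a(1) unfolding cr_less_def by blast
  obtain j where j: "j < s" "D y j \<noteq> D x j" "\<forall>k. j < k \<and> k < s \<longrightarrow> D y k = D x k" "T_less T (D y j) (D x j)"
    using a(2) unfolding cr_less_def by blast
  show False
  proof (cases i j rule: linorder_cases)
    case less thus ?thesis using i(3) j(1,2) by auto
  next
    case equal thus ?thesis using i(4) j(4) T_less_asym by simp
  next
    case greater thus ?thesis using j(3) i(1,2) by auto
  qed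
qed

lemma cr_less_trans: "cr_less gam s T x y \<Longrightarrow> cr_less gam s T y z \<Longrightarrow> cr_less gam s T x z"
proof -
  assume a: "cr_less gam s T x y" "cr_less gam s T y z"
  obtain i where i: "i < s" "D x i \<noteq> D y i" "\<forall>j. i < j \<and> j < s \<longrightarrow> D x j = D y j" "T_less T (D x i) (D y i)"
    using a(1) unfolding cr_less_def by blast
  obtain j where j: "j < s" "D y j \<noteq> D z j" "\<forall>k. j < k \<and> k < s \<longrightarrow> D y k = D z k" "T_less T (D y j) (D z j)"
    using a(2) unfolding cr_less_def by blast
  show ?thesis
  proof (cases i j rule: linorder_cases)
    case less
    hence "D x j = D y j" using i(3) j(1) by auto
    moreover have "\<forall>k. j < k \<and> k < s \<longrightarrow> D x k = D z k" using i(3) j(3) less by auto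
    ultimately show ?thesis unfolding cr_less_def using j by auto
  next
    case equal
    hence "T_less T (D x i) (D z i)" using i(4) j(4) T_less_trans by auto
    moreover hence "D x i \<noteq> D z i" using T_less_irrefl by auto
    moreover have "\<forall>k. i < k \<and> k < s \<longrightarrow> D x k = D z k" using i(3) j(3) equal by auto
    ultimately show ?thesis unfolding cr_less_def using i(1) by auto
  next
    case greater
    hence "D y i = D z i" using j(3) i(1) by auto
    moreover have "\<forall>k. i < k \<and> k < s \<longrightarrow> D x k = D z k" using i(3) j(3) greater by auto
    ultimately show ?thesis unfolding cr_less_def using i by auto
  qed
qed

lemma cr_less_total: assumes "x \<noteq> y" shows "cr_less gam s T x y \<or> cr_less gam s T y x"
proof -
  have ex: "\<exists>i. i < s \<and> D x i \<noteq> D y i" using cr_digit_inj assms by blast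
  define i where "i = (GREATEST i. i < s \<and> D x i \<noteq> D y i)"
  have bnd: "\<forall>i. i < s \<and> D x i \<noteq> D y i \<longrightarrow> i \<le> s" by auto
  obtain i0 where i0: "i0 < s \<and> D x i0 \<noteq> D y i0" using ex by blast
  have i: "i < s \<and> D x i \<noteq> D y i" unfolding i_def by (rule GreatestI_nat[of _ i0 s]) (use i0 bnd in auto)
  have above: "\<forall>j. i < j \<and> j < s \<longrightarrow> D x j = D y j"
  proof (intro allI impI)
    fix j assume j: "i < j \<and> j < s"
    show "D x j = D y j"
    proof (rule ccontr)
      assume "D x j \<noteq> D y j"
      hence "j \<le> i" unfolding i_def by (intro Greatest_le_nat[of _ j s]) (use j bnd in auto)
      thus False using j by simp
    qed
  qed
  have "T_less T (D x i) (D y i) \<or> T_less T (D y i) (D x i)"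
    using T_less_total cr_digit_T i by blast
  thus ?thesis
  proof
    assume "T_less T (D x i) (D y i)"
    hence "cr_less gam s T x y" unfolding cr_less_def using i above by blast
    thus ?thesis by blast
  next
    assume "T_less T (D y i) (D x i)"
    moreover have "\<forall>j. i < j \<and> j < s \<longrightarrow> D y j = D x j" using above by simp
    ultimately have "cr_less gam s T y x" unfolding cr_less_def using i by auto
    thus ?thesis by blast
  qed
qed

lemma cr_enum_prop: "distinct (cr_enum gam s T A) \<and> set (cr_enum gam s T A) = A"
proof -
  have asym: "\<And>x y. cr_less gam s T x y \<Longrightarrow> cr_less gam s T y x \<Longrightarrow> False" using cr_less_asym by blast
  have tr: "\<And>x y z. cr_less gam s T x y \<Longrightarrow> cr_less gam s T y z \<Longrightarrow> cr_less gam s T x z"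
    using cr_less_trans by blast
  have tot: "\<And>x y. x \<noteq> y \<Longrightarrow> cr_less gam s T x y \<or> cr_less gam s T y x"
    using cr_less_total by blast
  have "\<exists>xs. distinct xs \<and> set xs = A \<and> sorted_wrt (cr_less gam s T) xs"
    using sorted_exists[of "cr_less gam s T", OF asym tr tot] by simp
  then obtain xs where xs: "distinct xs \<and> set xs = A \<and> sorted_wrt (cr_less gam s T) xs" by blast
  have "\<exists>!xs. distinct xs \<and> set xs = A \<and> sorted_wrt (cr_less gam s T) xs"
  proof (rule ex1I[of _ xs])
    show "distinct xs \<and> set xs = A \<and> sorted_wrt (cr_less gam s T) xs" by (rule xs)
    fix ys assume "distinct ys \<and> set ys = A \<and> sorted_wrt (cr_less gam s T) ys"
    thus "ys = xs" using sorted_unique[of "cr_less gam s T" ys xs, OF asym] xs by simp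
  qed
  from theI'[OF this] show ?thesis unfolding cr_enum_def by blast
qed

end

lemma concat_cons_product:
  "concat (map (\<lambda>r. map (\<lambda>col. r # col) G) xs) = map (\<lambda>(r, v). r # v) (List.product xs G)"
  by (induction xs) auto

lemma dist_cons_prod:
  assumes "distinct xs" "distinct G"
  shows "distinct (concat (map (\<lambda>r. map (\<lambda>col. r # col) G) xs))"
    "set (concat (map (\<lambda>r. map (\<lambda>col. r # col) G) xs)) = {r # v | r v. r \<in> set xs \<and> v \<in> set G}"
proof -
  have inj: "inj_on (\<lambda>(r, v). r # v) (set (List.product xs G))"
    by (rule inj_onI) auto
  show "distinct (concat (map (\<lambda>r. map (\<lambda>col. r # col) G) xs))"
    unfolding concat_cons_product using distinct_product[OF assms] inj by (simp add: distinct_map)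
  show "set (concat (map (\<lambda>r. map (\<lambda>col. r # col) G) xs)) = {r # v | r v. r \<in> set xs \<and> v \<in> set G}"
    unfolding concat_cons_product by auto
qed

context cr begin

definition Bset :: "nat \<Rightarrow> 'a list set" where
  "Bset k = {v. length v = k \<and> (\<exists>i<k. v ! i = 1 \<and> (\<forall>j<i. gam dvd v ! j))}"

lemma rho_prop: "distinct (rho_list gam s T) \<and> set (rho_list gam s T) = UNIV"
  unfolding rho_list_def by (rule cr_enum_prop)

lemma gaml_prop: "distinct (gam_list gam s T) \<and> set (gam_list gam s T) = {x. gam dvd x}"
  unfolding gam_list_def by (rule cr_enum_prop)

lemma Galpha_prop: "distinct (G_alpha gam s T (Suc n)) \<and> set (G_alpha gam s T (Suc n)) = {v. length v = Suc n}"
proof (induction n)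
  case 0
  have "distinct (map (\<lambda>r. [r]) (rho_list gam s T))"
    using rho_prop by (simp add: distinct_map inj_on_def)
  moreover have "set (map (\<lambda>r. [r]) (rho_list gam s T)) = {v. length v = Suc 0}"
    using rho_prop by (auto simp: length_Suc_conv)
  ultimately show ?case by simp
next
  case (Suc n)
  have eq: "G_alpha gam s T (Suc (Suc n)) = concat (map (\<lambda>r. map (\<lambda>col. r # col) (G_alpha gam s T (Suc n))) (rho_list gam s T))"
    by simp
  show ?case unfolding eq
  proof
    show "distinct (concat (map (\<lambda>r. map (\<lambda>col. r # col) (G_alpha gam s T (Suc n))) (rho_list gam s T)))"
      using dist_cons_prod(1) rho_prop Suc.IH by blast
    have "set (concat (map (\<lambda>r. map (\<lambda>col. r # col) (G_alpha gam s T (Suc n))) (rho_list gam s T)))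
        = {r # v | r v. r \<in> set (rho_list gam s T) \<and> v \<in> set (G_alpha gam s T (Suc n))}"
      using dist_cons_prod(2) rho_prop Suc.IH by blast
    also have "\<dots> = {v. length v = Suc (Suc n)}"
      using rho_prop Suc.IH by (auto simp: length_Suc_conv)
    finally show "set (concat (map (\<lambda>r. map (\<lambda>col. r # col) (G_alpha gam s T (Suc n))) (rho_list gam s T))) = {v. length v = Suc (Suc n)}" .
  qed
qed

lemma Bset_Suc: "Bset (Suc m) = {1 # v | v. length v = m} \<union> {a # w | a w. gam dvd a \<and> w \<in> Bset m}"
proof
  show "Bset (Suc m) \<subseteq> {1 # v | v. length v = m} \<union> {a # w | a w. gam dvd a \<and> w \<in> Bset m}"
  proof
    fix v assume "v \<in> Bset (Suc m)"
    then obtain i where v: "length v = Suc m" "i < Suc m" "v ! i = 1" "\<forall>j<i. gam dvd v ! j"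
      unfolding Bset_def by blast
    obtain x w where xw: "v = x # w" "length w = m" using v(1) by (auto simp: length_Suc_conv)
    show "v \<in> {1 # v | v. length v = m} \<union> {a # w | a w. gam dvd a \<and> w \<in> Bset m}"
    proof (cases i)
      case 0
      thus ?thesis using v xw by simp
    next
      case (Suc i')
      have "gam dvd x" using v(4) xw Suc by auto
      moreover have "w \<in> Bset m"
      proof -
        have "i' < m" "w ! i' = 1" using v xw Suc by auto
        moreover have "\<forall>j<i'. gam dvd w ! j"
        proof (intro allI impI)
          fix j assume "j < i'"
          hence "Suc j < i" using Suc by simp
          thus "gam dvd w ! j" using v(4) xw by fastforce
        qed
        ultimately show ?thesis unfolding Bset_def using xw by blast
      qed
      ultimately show ?thesis using xw by blast
    qed
  qed
  show "{1 # v | v. length v = m} \<union> {a # w | a w. gam dvd a \<and> w \<in> Bset m} \<subseteq> Bset (Suc m)"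
  proof
    fix v assume "v \<in> {1 # v | v. length v = m} \<union> {a # w | a w. gam dvd a \<and> w \<in> Bset m}"
    thus "v \<in> Bset (Suc m)"
    proof
      assume "v \<in> {1 # v | v. length v = m}"
      then obtain w where w: "v = 1 # w" "length w = m" by blast
      have "v ! 0 = 1" "0 < Suc m" "length v = Suc m" "\<forall>j<0. gam dvd v ! j" using w by auto
      thus ?thesis unfolding Bset_def by blast
    next
      assume "v \<in> {a # w | a w. gam dvd a \<and> w \<in> Bset m}"
      then obtain a w where aw: "v = a # w" "gam dvd a" "w \<in> Bset m" by blast
      then obtain i where i: "length w = m" "i < m" "w ! i = 1" "\<forall>j<i. gam dvd w ! j"
        unfolding Bset_def by blast
      have "\<forall>j<Suc i. gam dvd v ! j"
      proof (intro allI impI)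
        fix j assume "j < Suc i"
        thus "gam dvd v ! j" using aw i by (cases j) auto
      qed
      moreover have "v ! Suc i = 1" "Suc i < Suc m" "length v = Suc m" using aw i by auto
      ultimately show ?thesis unfolding Bset_def by blast
    qed
  qed
qed

lemma Gbeta_prop: "distinct (G_beta gam s T (Suc n)) \<and> set (G_beta gam s T (Suc n)) = Bset (Suc n)"
proof (induction n)
  case 0
  have "Bset (Suc 0) = {[1]}" unfolding Bset_def by (auto simp: length_Suc_conv)
  thus ?case by simp
next
  case (Suc n)
  let ?A = "map (\<lambda>col. 1 # col) (G_alpha gam s T (Suc n))"
  let ?C = "concat (map (\<lambda>a. map (\<lambda>col. a # col) (G_beta gam s T (Suc n))) (gam_list gam s T))"
  have eq: "G_beta gam s T (Suc (Suc n)) = ?A @ ?C" by simp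
  have dA: "distinct ?A" using Galpha_prop[of n] by (simp add: distinct_map)
  have sA: "set ?A = {1 # v | v. length v = Suc n}" using Galpha_prop[of n] by auto
  have dC: "distinct ?C" by (rule dist_cons_prod(1)) (use gaml_prop Suc.IH in simp_all)
  have "set ?C = {r # v | r v. r \<in> set (gam_list gam s T) \<and> v \<in> set (G_beta gam s T (Suc n))}"
    by (rule dist_cons_prod(2)) (use gaml_prop Suc.IH in simp_all)
  also have "\<dots> = {a # w | a w. gam dvd a \<and> w \<in> Bset (Suc n)}" using gaml_prop Suc.IH by simp
  finally have sC: "set ?C = {a # w | a w. gam dvd a \<and> w \<in> Bset (Suc n)}" .
  have disj: "set ?A \<inter> set ?C = {}"
  proof (rule ccontr)
    assume "set ?A \<inter> set ?C \<noteq> {}"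
    then obtain x where "x \<in> set ?A" "x \<in> set ?C" by blast
    then obtain v a w where "x = 1 # v" "x = a # w" "gam dvd a" unfolding sA sC by blast
    hence "gam dvd 1" by simp
    thus False using ng by simp
  qed
  have d: "distinct (?A @ ?C)" using dA dC disj by simp
  have st: "set (?A @ ?C) = Bset (Suc (Suc n))" unfolding set_append sA sC Bset_Suc[of "Suc n"] by simp
  show ?case unfolding eq using d st by simp
qed

end

definition dot :: "nat \<Rightarrow> (nat \<Rightarrow> 'a::comm_ring_1) \<Rightarrow> 'a list \<Rightarrow> 'a" where
  "dot k l v = (\<Sum>i<k. l i * v ! i)"

definition vadd :: "'a::comm_ring_1 list \<Rightarrow> 'a list \<Rightarrow> 'a list" where
  "vadd v w = map2 (+) v w"

definition vneg :: "'a::comm_ring_1 list \<Rightarrow> 'a list" where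
  "vneg v = map uminus v"

lemma length_vadd[simp]: "length (vadd v w) = min (length v) (length w)"
  by (simp add: vadd_def)

lemma length_vneg[simp]: "length (vneg v) = length v"
  by (simp add: vneg_def)

lemma nth_vadd: "i < length v \<Longrightarrow> i < length w \<Longrightarrow> vadd v w ! i = v ! i + w ! i"
  by (simp add: vadd_def)

lemma nth_vneg: "i < length v \<Longrightarrow> vneg v ! i = - (v ! i)"
  by (simp add: vneg_def)

lemma dot_add: "length v = k \<Longrightarrow> length w = k \<Longrightarrow> dot k l (vadd v w) = dot k l v + dot k l w"
  unfolding dot_def by (simp add: nth_vadd distrib_left sum.distrib)

lemma dot_neg: "length v = k \<Longrightarrow> dot k l (vneg v) = - dot k l v"
  unfolding dot_def by (simp add: nth_vneg sum_negf)

lemma dot_single: "p < k \<Longrightarrow> dot k l ((replicate k 0)[p := c]) = l p * c"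
proof -
  assume p: "p < k"
  have "dot k l ((replicate k 0)[p := c]) = (\<Sum>i<k. if i = p then l i * c else 0)"
    unfolding dot_def by (rule sum.cong) (auto simp: nth_list_update)
  also have "\<dots> = l p * c" using p by (simp add: sum.delta)
  finally show ?thesis .
qed

lemma dot_scale: "dot k l (map ((*) u) v) = u * dot k l v" if "length v = k"
  unfolding dot_def using that by (simp add: sum_distrib_left algebra_simps)

locale vgroup =
  fixes D :: "'a::comm_ring_1 list set" and k :: nat
  assumes Dlen: "\<And>v. v \<in> D \<Longrightarrow> length v = k"
    and Dadd: "\<And>v w. v \<in> D \<Longrightarrow> w \<in> D \<Longrightarrow> vadd v w \<in> D"
    and Dneg: "\<And>v. v \<in> D \<Longrightarrow> vneg v \<in> D"
    and Dfin: "finite D"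
begin

lemma fiber_card: assumes x0: "x0 \<in> D"
  shows "card {x\<in>D. dot k l x = dot k l x0} = card {x\<in>D. dot k l x = 0}"
proof -
  let ?A = "{x\<in>D. dot k l x = dot k l x0}" and ?B = "{x\<in>D. dot k l x = 0}"
  let ?f = "\<lambda>x. vadd x (vneg x0)" and ?g = "\<lambda>x. vadd x x0"
  have lx0: "length x0 = k" using Dlen x0 by blast
  have c1: "?g (?f a) = a" if "a \<in> D" for a
  proof -
    have la: "length a = k" using Dlen that by blast
    show ?thesis by (rule nth_equalityI) (simp_all add: la lx0 nth_vadd nth_vneg)
  qed
  have c2: "?f (?g a) = a" if "a \<in> D" for a
  proof -
    have la: "length a = k" using Dlen that by blast
    show ?thesis by (rule nth_equalityI) (simp_all add: la lx0 nth_vadd nth_vneg)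
  qed
  have "bij_betw ?f ?A ?B"
  proof (rule bij_betw_byWitness[where f' = ?g])
    show "\<forall>a\<in>?A. ?g (?f a) = a" using c1 by blast
    show "\<forall>a\<in>?B. ?f (?g a) = a" using c2 by blast
    show "?f ` ?A \<subseteq> ?B"
    proof
      fix y assume "y \<in> ?f ` ?A"
      then obtain x where x: "x \<in> D" "dot k l x = dot k l x0" "y = ?f x" by blast
      have "y \<in> D" using x Dadd Dneg x0 by blast
      moreover have "dot k l y = 0" using x Dlen x0 by (simp add: dot_add dot_neg)
      ultimately show "y \<in> ?B" by blast
    qed
    show "?g ` ?B \<subseteq> ?A"
    proof
      fix y assume "y \<in> ?g ` ?B"
      then obtain x where x: "x \<in> D" "dot k l x = 0" "y = ?g x" by blast
      have "y \<in> D" using x Dadd x0 by blast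
      moreover have "dot k l y = dot k l x0" using x Dlen x0 by (simp add: dot_add)
      ultimately show "y \<in> ?A" by blast
    qed
  qed
  thus ?thesis by (rule bij_betw_same_card)
qed

lemma card_split: "card D = card (dot k l ` D) * card {x\<in>D. dot k l x = 0}"
proof -
  have "card D = (\<Sum>x\<in>D. 1::nat)" by simp
  also have "\<dots> = (\<Sum>y\<in>dot k l ` D. (\<Sum>x\<in>{x. x \<in> D \<and> dot k l x = y}. 1))"
    by (rule sum.image_gen[OF Dfin])
  also have "\<dots> = (\<Sum>y\<in>dot k l ` D. card {x\<in>D. dot k l x = 0})"
  proof (rule sum.cong)
    fix y assume "y \<in> dot k l ` D"
    then obtain x0 where "x0 \<in> D" "y = dot k l x0" by blast
    thus "(\<Sum>x\<in>{x. x \<in> D \<and> dot k l x = y}. 1) = card {x\<in>D. dot k l x = 0}"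
      using fiber_card by simp
  qed simp
  also have "\<dots> = card (dot k l ` D) * card {x\<in>D. dot k l x = 0}" by simp
  finally show ?thesis .
qed

end

lemma final_alg:
  fixes Q B Z :: real and s k t :: nat
  assumes Q: "Q \<ge> 2" and s: "s \<ge> 1" and k: "k \<ge> 2"
    and eB: "(Q ^ s - Q ^ (s - 1)) * B = Q ^ (s * k) - Q ^ ((s - 1) * k)"
    and eZ: "(Q ^ s - Q ^ (s - 1)) * Z = Q ^ (s * (k - 1) + t) - Q ^ ((s - 1) * (k - 1) + t)"
  shows "B - Z = Q ^ ((s - 1) * (k - 1)) * (Q ^ k - 1) / (Q - 1)
               - Q ^ t * (Q ^ ((s - 1) * (k - 1 - 1)) * (Q ^ (k - 1) - 1) / (Q - 1))"
proof -
  obtain s' where s': "s = Suc s'" using s by (cases s) auto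
  obtain k' where k': "k = Suc (Suc k')" using k by (metis add_2_eq_Suc le_Suc_ex)
  define a where "a = Q ^ s'"
  define c where "c = Q ^ k'"
  define e where "e = a ^ k'"
  define f where "f = Q ^ t"
  have Q1: "Q - 1 \<noteq> 0" using Q by simp
  have apos: "a > 0" unfolding a_def using Q by simp
  have cU: "Q ^ s - Q ^ (s - 1) = a * (Q - 1)" unfolding a_def s' by (simp add: algebra_simps)
  have cUnz: "a * (Q - 1) \<noteq> 0" using apos Q1 by simp
  have p1: "Q ^ (s * k) = c * Q ^ 2 * e * a ^ 2"
  proof -
    have "Q ^ (s * k) = (Q ^ s) ^ k" by (simp add: power_mult)
    also have "\<dots> = (Q * a) ^ k" unfolding a_def s' by simp
    also have "\<dots> = Q ^ k * a ^ k" by (simp add: power_mult_distrib)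
    also have "Q ^ k = c * Q ^ 2" unfolding c_def k' by (simp add: power_add[symmetric])
    also have "a ^ k = e * a ^ 2" unfolding e_def k' by (simp add: power_add[symmetric])
    finally show ?thesis by (simp add: mult_ac)
  qed
  have p2: "Q ^ ((s - 1) * k) = e * a ^ 2"
  proof -
    have "Q ^ ((s - 1) * k) = a ^ k" unfolding a_def s' by (simp add: power_mult)
    also have "a ^ k = e * a ^ 2" unfolding e_def k' by (simp add: power_add[symmetric])
    finally show ?thesis .
  qed
  have p3: "Q ^ (s * (k - 1) + t) = c * Q * e * a * f"
  proof -
    have "Q ^ (s * (k - 1) + t) = (Q ^ s) ^ (k - 1) * f" unfolding f_def by (simp add: power_mult power_add)
    also have "(Q ^ s) ^ (k - 1) = (Q * a) ^ Suc k'" unfolding a_def s' k' by simp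
    also have "\<dots> = c * Q * e * a" unfolding c_def e_def by (simp add: power_mult_distrib mult_ac)
    finally show ?thesis .
  qed
  have p4: "Q ^ ((s - 1) * (k - 1) + t) = e * a * f"
  proof -
    have ex: "(s - 1) * (k - 1) + t = s' * Suc k' + t" by (simp add: s' k')
    have "Q ^ ((s - 1) * (k - 1) + t) = a ^ Suc k' * f" unfolding a_def f_def ex by (simp only: power_add power_mult)
    thus ?thesis unfolding e_def by (simp add: mult_ac)
  qed
  have ex1: "(s - 1) * (k - 1) = s' * Suc k'" by (simp add: s' k')
  have L1: "Q ^ ((s - 1) * (k - 1)) = e * a" unfolding ex1 power_mult a_def e_def by (simp add: mult_ac)
  have L2: "Q ^ ((s - 1) * (k - 1 - 1)) = e" unfolding a_def e_def s' k' by (simp add: power_mult)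
  have L3: "Q ^ k = c * Q ^ 2" unfolding c_def k' by (simp add: power_add[symmetric])
  have L4: "Q ^ (k - 1) = c * Q" unfolding c_def k' by simp
  have B: "B = e * a * (c * Q ^ 2 - 1) / (Q - 1)"
  proof -
    have "a * (Q - 1) * B = e * a ^ 2 * (c * Q ^ 2 - 1)" using eB unfolding cU p1 p2 by (simp add: algebra_simps)
    moreover have "a * (Q - 1) * (e * a * (c * Q ^ 2 - 1) / (Q - 1)) = e * a ^ 2 * (c * Q ^ 2 - 1)"
      using Q1 by (simp add: power2_eq_square)
    ultimately have "a * (Q - 1) * B = a * (Q - 1) * (e * a * (c * Q ^ 2 - 1) / (Q - 1))" by simp
    thus ?thesis by (simp only: mult_left_cancel[OF cUnz])
  qed
  have Z: "Z = e * f * (c * Q - 1) / (Q - 1)"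
  proof -
    have "a * (Q - 1) * Z = e * a * f * (c * Q - 1)" using eZ unfolding cU p3 p4 by (simp add: algebra_simps)
    moreover have "a * (Q - 1) * (e * f * (c * Q - 1) / (Q - 1)) = e * a * f * (c * Q - 1)"
      using Q1 by simp
    ultimately have "a * (Q - 1) * Z = a * (Q - 1) * (e * f * (c * Q - 1) / (Q - 1))" by simp
    thus ?thesis by (simp only: mult_left_cancel[OF cUnz])
  qed
  show ?thesis unfolding B Z L1 L2 L3 L4 f_def using Q1 by (simp add: field_simps)
qed

context cr begin

lemma unit_iff: "x dvd 1 \<longleftrightarrow> \<not> gam dvd x"
  using nonunit_dvd unit_ndvd by blast

lemma card_univ: "card (UNIV :: 'a set) = length T ^ s"
  using card_Id[of 0] by simp

lemma card_gamR: "card {x. gam dvd x} = length T ^ (s - 1)"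
  using card_Id[of 1] s1 by simp

lemma card_U: "card {u::'a. u dvd 1} = length T ^ s - length T ^ (s - 1)"
proof -
  have eq: "{u::'a. u dvd 1} = UNIV - {x. gam dvd x}" using unit_iff by auto
  have "card {u::'a. u dvd 1} = card (UNIV - {x. gam dvd x})" using eq by (rule arg_cong)
  also have "\<dots> = card (UNIV :: 'a set) - card {x. gam dvd x}" by (rule card_Diff_subset) auto
  finally show ?thesis using card_univ card_gamR by simp
qed

end

context cr begin

lemma units_bij:
  assumes S: "S \<subseteq> Bset k"
  shows "inj_on (\<lambda>(u, w). map ((*) u) w) ({u::'a. u dvd 1} \<times> S)"
proof (rule inj_onI, clarify)
  fix u :: 'a and w u' w'
  assume u: "u dvd 1" and w: "w \<in> S" and u': "u' dvd 1" and w': "w' \<in> S"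
    and eq: "map ((*) u) w = map ((*) u') w'"
  obtain i where i: "length w = k" "i < k" "w ! i = 1" "\<forall>j<i. gam dvd w ! j"
    using w S unfolding Bset_def by blast
  obtain i' where i': "length w' = k" "i' < k" "w' ! i' = 1" "\<forall>j<i'. gam dvd w' ! j"
    using w' S unfolding Bset_def by blast
  have nth: "u * w ! j = u' * w' ! j" if "j < k" for j
    using arg_cong[OF eq, of "\<lambda>v. v ! j"] that i(1) i'(1) by simp
  have "i = i'"
  proof (rule ccontr)
    assume "i \<noteq> i'"
    hence "i < i' \<or> i' < i" by auto
    thus False
    proof
      assume "i < i'"
      hence "gam dvd u' * w' ! i" using i'(4) by simp
      hence "gam dvd u" using nth[of i] i by simp
      thus False using u unit_ndvd by blast
    next
      assume "i' < i"
      hence "gam dvd u * w ! i'" using i(4) by simp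
      hence "gam dvd u'" using nth[of i'] i' by simp
      thus False using u' unit_ndvd by blast
    qed
  qed
  hence uu: "u = u'" using nth[of i] i i' by simp
  obtain v where v: "1 = u * v" using u by (auto elim: dvdE)
  have "w = w'"
  proof (rule nth_equalityI)
    show "length w = length w'" using i i' by simp
    fix j assume "j < length w"
    hence "u * w ! j = u * w' ! j" using nth uu i(1) by simp
    hence "v * (u * w ! j) = v * (u * w' ! j)" by simp
    thus "w ! j = w' ! j" using v by (simp add: mult.assoc[symmetric] mult.commute[of v u])
  qed
  thus "u = u' \<and> w = w'" using uu by simp
qed

definition Fset :: "nat \<Rightarrow> 'a list set" where
  "Fset k = {v. length v = k \<and> (\<exists>i<k. v ! i dvd 1)}"

lemma units_img: "(\<lambda>(u, w). map ((*) u) w) ` ({u::'a. u dvd 1} \<times> Bset k) = Fset k"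
proof
  show "(\<lambda>(u, w). map ((*) u) w) ` ({u::'a. u dvd 1} \<times> Bset k) \<subseteq> Fset k"
  proof clarify
    fix u :: 'a and w assume u: "u dvd 1" and w: "w \<in> Bset k"
    obtain i where i: "length w = k" "i < k" "w ! i = 1" using w unfolding Bset_def by blast
    have "map ((*) u) w ! i dvd 1" using i u by simp
    thus "map ((*) u) w \<in> Fset k" unfolding Fset_def using i by auto
  qed
  show "Fset k \<subseteq> (\<lambda>(u, w). map ((*) u) w) ` ({u::'a. u dvd 1} \<times> Bset k)"
  proof
    fix v assume "v \<in> Fset k"
    hence v: "length v = k" "\<exists>i<k. v ! i dvd 1" unfolding Fset_def by auto
    define i where "i = (LEAST i. i < k \<and> v ! i dvd 1)"
    have i: "i < k \<and> v ! i dvd 1" unfolding i_def using v(2) by (rule LeastI_ex)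
    have bef: "\<not> v ! j dvd 1" if "j < i" for j
      using not_less_Least[OF that[unfolded i_def]] that i by auto
    obtain u' where u': "1 = v ! i * u'" using i by (auto elim: dvdE)
    let ?w = "map ((*) u') v"
    have "?w \<in> Bset k"
    proof -
      have "?w ! i = 1" using i u' v by (simp add: mult.commute)
      moreover have "\<forall>j<i. gam dvd ?w ! j"
      proof (intro allI impI)
        fix j assume j: "j < i"
        hence "gam dvd v ! j" using bef nonunit_dvd by blast
        thus "gam dvd ?w ! j" using j i v by simp
      qed
      ultimately show ?thesis unfolding Bset_def using i v by auto
    qed
    moreover have "v = map ((*) (v ! i)) ?w"
    proof (rule nth_equalityI)
      show "length v = length (map ((*) (v ! i)) ?w)" by simp
      fix j assume "j < length v"
      thus "v ! j = map ((*) (v ! i)) ?w ! j" using u' by (simp add: mult.assoc[symmetric])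
    qed
    moreover have "v ! i dvd 1" using i by simp
    ultimately show "v \<in> (\<lambda>(u, w). map ((*) u) w) ` ({u::'a. u dvd 1} \<times> Bset k)"
      by (intro image_eqI[where x="(v ! i, ?w)"]) auto
  qed
qed

lemma units_img_ker:
  "(\<lambda>(u, w). map ((*) u) w) ` ({u::'a. u dvd 1} \<times> {w \<in> Bset k. dot k l w = 0}) = {v \<in> Fset k. dot k l v = 0}"
proof -
  have len: "length w = k" if "w \<in> Bset k" for w using that unfolding Bset_def by blast
  have z: "u * x = 0 \<longleftrightarrow> x = 0" if uu: "u dvd 1" for u x :: 'a
  proof
    assume ux: "u * x = 0"
    obtain v where v: "1 = u * v" using uu unfolding dvd_def by blast
    have "x = (u * v) * x" using v by simp
    also have "\<dots> = v * (u * x)" by (simp add: mult_ac)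
    finally show "x = 0" using ux by simp
  qed simp
  show ?thesis
  proof
    show "(\<lambda>(u, w). map ((*) u) w) ` ({u::'a. u dvd 1} \<times> {w \<in> Bset k. dot k l w = 0}) \<subseteq> {v \<in> Fset k. dot k l v = 0}"
    proof
      fix x assume "x \<in> (\<lambda>(u, w). map ((*) u) w) ` ({u::'a. u dvd 1} \<times> {w \<in> Bset k. dot k l w = 0})"
      then obtain p where p: "p \<in> {u::'a. u dvd 1} \<times> {w \<in> Bset k. dot k l w = 0}" "x = (\<lambda>(u, w). map ((*) u) w) p" by (rule imageE)
      obtain u w where "p = (u, w)" by (cases p)
      hence u: "u dvd 1" and w: "w \<in> Bset k" and d: "dot k l w = 0" and x: "x = map ((*) u) w" using p by auto
      have "map ((*) u) w \<in> (\<lambda>(u, w). map ((*) u) w) ` ({u::'a. u dvd 1} \<times> Bset k)"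
        by (rule image_eqI[where x="(u, w)"]) (use u w in auto)
      hence "map ((*) u) w \<in> Fset k" unfolding units_img .
      moreover have "dot k l (map ((*) u) w) = 0" using dot_scale[OF len[OF w]] d by simp
      ultimately show "x \<in> {v \<in> Fset k. dot k l v = 0}" using x by blast
    qed
    show "{v \<in> Fset k. dot k l v = 0} \<subseteq> (\<lambda>(u, w). map ((*) u) w) ` ({u::'a. u dvd 1} \<times> {w \<in> Bset k. dot k l w = 0})"
    proof
      fix v assume "v \<in> {v \<in> Fset k. dot k l v = 0}"
      hence v: "v \<in> Fset k" "dot k l v = 0" by auto
      have "v \<in> (\<lambda>(u, w). map ((*) u) w) ` ({u::'a. u dvd 1} \<times> Bset k)" unfolding units_img by (rule v(1))
      then obtain p where p: "p \<in> {u::'a. u dvd 1} \<times> Bset k" "v = (\<lambda>(u, w). map ((*) u) w) p" by (rule imageE)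
      obtain u w where "p = (u, w)" by (cases p)
      hence uw: "u dvd 1" "w \<in> Bset k" "v = map ((*) u) w" using p by auto
      have "dot k l v = u * dot k l w" using uw(3) dot_scale[OF len[OF uw(2)]] by simp
      hence "u * dot k l w = 0" using v(2) by simp
      hence "dot k l w = 0" using z uw(1) by blast
      thus "v \<in> (\<lambda>(u, w). map ((*) u) w) ` ({u::'a. u dvd 1} \<times> {w \<in> Bset k. dot k l w = 0})"
        using uw by (intro image_eqI[where x="(u, w)"]) auto
    qed
  qed
qed

end

context cr begin

lemma count_main:
  assumes k2: "2 \<le> k" and ts: "t < s" and dv: "\<forall>i<k. gam ^ t dvd l i" and p: "p < k"
    and lp: "l p = gam ^ t * u" and u: "u dvd 1"
  shows "real (card {w \<in> Bset k. dot k l w \<noteq> 0}) =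
         L_beta (length T) s k - real (length T) ^ t * L_beta (length T) s (k - 1)"
proof -
  define q where "q = length T"
  have q2': "q \<ge> 2" using q2 q_def by simp
  let ?V = "{v::'a list. length v = k}"
  let ?D1 = "{v::'a list. set v \<subseteq> {x. gam dvd x} \<and> length v = k}"
  have finV: "finite ?V" using finite_lists_length_eq[of "UNIV::'a set" k] by simp
  have cardV: "card ?V = (q ^ s) ^ k" using card_lists_length_eq[of "UNIV::'a set" k] card_univ q_def by simp
  have finD1: "finite ?D1" by (rule finite_lists_length_eq) simp
  have cardD1: "card ?D1 = (q ^ (s - 1)) ^ k"
    using card_lists_length_eq[of "{x. gam dvd x}" k] card_gamR q_def by simp
  have D1mem: "v \<in> ?D1 \<longleftrightarrow> length v = k \<and> (\<forall>i<k. gam dvd v ! i)" for v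
    by (auto simp: subset_iff in_set_conv_nth)
  interpret GV: vgroup ?V k
    by unfold_locales (auto simp: finV)
  interpret GD: vgroup ?D1 k
  proof unfold_locales
    show "finite ?D1" by (rule finD1)
    fix v assume "v \<in> ?D1" thus "length v = k" by simp
  next
    fix v w assume "v \<in> ?D1" "w \<in> ?D1"
    thus "vadd v w \<in> ?D1" unfolding D1mem by (auto simp: nth_vadd)
  next
    fix v assume "v \<in> ?D1"
    thus "vneg v \<in> ?D1" unfolding D1mem by (auto simp: nth_vneg)
  qed
  obtain u' where u': "1 = u * u'" using u unfolding dvd_def by blast
  have img0: "dot k l ` ?V = {y. gam ^ t dvd y}"
  proof
    show "dot k l ` ?V \<subseteq> {y. gam ^ t dvd y}"
    proof
      fix y assume "y \<in> dot k l ` ?V"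
      then obtain v where "y = dot k l v" by blast
      moreover have "gam ^ t dvd dot k l v" unfolding dot_def
        by (rule dvd_sum) (use dv in auto)
      ultimately show "y \<in> {y. gam ^ t dvd y}" by simp
    qed
    show "{y. gam ^ t dvd y} \<subseteq> dot k l ` ?V"
    proof
      fix y assume "y \<in> {y. gam ^ t dvd y}"
      then obtain z where z: "y = gam ^ t * z" unfolding dvd_def by blast
      let ?v = "(replicate k 0)[p := z * u']"
      have "dot k l ?v = l p * (z * u')" by (rule dot_single[OF p])
      also have "\<dots> = gam ^ t * z * (u * u')" unfolding lp by (simp add: mult_ac)
      also have "\<dots> = y" using z u' by simp
      finally have "dot k l ?v = y" .
      moreover have "?v \<in> ?V" by simp
      ultimately show "y \<in> dot k l ` ?V" by (intro rev_image_eqI[where x="?v"]) simp_all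
    qed
  qed
  have img1: "dot k l ` ?D1 = {y. gam ^ Suc t dvd y}"
  proof
    show "dot k l ` ?D1 \<subseteq> {y. gam ^ Suc t dvd y}"
    proof
      fix y assume "y \<in> dot k l ` ?D1"
      then obtain v where v: "v \<in> ?D1" "y = dot k l v" by blast
      have "gam ^ Suc t dvd dot k l v" unfolding dot_def
      proof (rule dvd_sum)
        fix i assume "i \<in> {..<k}"
        hence "gam ^ t dvd l i" "gam dvd v ! i" using dv v(1) D1mem by auto
        hence "gam ^ t * gam dvd l i * v ! i" by (rule mult_dvd_mono)
        thus "gam ^ Suc t dvd l i * v ! i" by (simp add: mult.commute)
      qed
      thus "y \<in> {y. gam ^ Suc t dvd y}" using v by simp
    qed
    show "{y. gam ^ Suc t dvd y} \<subseteq> dot k l ` ?D1"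
    proof
      fix y assume "y \<in> {y. gam ^ Suc t dvd y}"
      then obtain z where z: "y = gam ^ Suc t * z" unfolding dvd_def by blast
      let ?v = "(replicate k 0)[p := gam * z * u']"
      have "dot k l ?v = l p * (gam * z * u')" by (rule dot_single[OF p])
      also have "\<dots> = gam ^ Suc t * z * (u * u')" unfolding lp by (simp add: mult_ac)
      also have "\<dots> = y" using z u' by simp
      finally have "dot k l ?v = y" .
      moreover have "?v \<in> ?D1" unfolding D1mem
      proof (intro conjI allI impI)
        show "length ?v = k" by simp
        fix i assume i: "i < k"
        show "gam dvd ?v ! i" using i p by (cases "i = p") simp_all
      qed
      ultimately show "y \<in> dot k l ` ?D1" by (intro rev_image_eqI[where x="?v"]) simp_all
    qed
  qed
  define K0 where "K0 = {x \<in> ?V. dot k l x = 0}"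
  define K1 where "K1 = {x \<in> ?D1. dot k l x = 0}"
  have E1: "(q ^ s) ^ k = q ^ (s - t) * card K0"
    using GV.card_split[of l] img0 card_Id[of t] ts cardV q_def K0_def by simp
  have E2: "(q ^ (s - 1)) ^ k = q ^ (s - Suc t) * card K1"
    using GD.card_split[of l] img1 card_Id[of "Suc t"] ts cardD1 q_def K1_def by simp
  obtain k0 where k0: "k = Suc k0" using k2 by (cases k) auto
  have cK0: "card K0 = q ^ (s * (k - 1) + t)"
  proof -
    have ex: "s * k = (s - t) + (s * (k - 1) + t)" using ts unfolding k0 by simp
    have pe: "q ^ (s * k) = q ^ (s - t) * q ^ (s * (k - 1) + t)" by (subst ex) (rule power_add)
    have "q ^ (s - t) * card K0 = q ^ (s - t) * q ^ (s * (k - 1) + t)"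
      using E1 pe by (simp add: power_mult)
    moreover have "q ^ (s - t) \<noteq> 0" using q2' by simp
    ultimately show ?thesis by (metis mult_left_cancel)
  qed
  have cK1: "card K1 = q ^ ((s - 1) * (k - 1) + t)"
  proof -
    have ex: "(s - 1) * k = (s - Suc t) + ((s - 1) * (k - 1) + t)" using ts unfolding k0 by simp
    have pe: "q ^ ((s - 1) * k) = q ^ (s - Suc t) * q ^ ((s - 1) * (k - 1) + t)" by (subst ex) (rule power_add)
    have "q ^ (s - Suc t) * card K1 = q ^ (s - Suc t) * q ^ ((s - 1) * (k - 1) + t)"
      using E2 pe by (simp add: power_mult)
    moreover have "q ^ (s - Suc t) \<noteq> 0" using q2' by simp
    ultimately show ?thesis by (metis mult_left_cancel)
  qed
  let ?U = "{u::'a. u dvd 1}"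
  let ?Z = "{w \<in> Bset k. dot k l w = 0}"
  have BV: "Bset k \<subseteq> ?V" unfolding Bset_def by auto
  have finB: "finite (Bset k)" using finite_subset[OF BV finV] .
  have FV: "Fset k = ?V - ?D1" unfolding Fset_def using D1mem unit_iff by auto
  have D1V: "?D1 \<subseteq> ?V" by auto
  have cF: "card (Fset k) = card ?V - card ?D1" unfolding FV by (rule card_Diff_subset[OF finD1 D1V])
  have cF2: "card (Fset k) = card ?U * card (Bset k)"
  proof -
    have "card (Fset k) = card ((\<lambda>(u, w). map ((*) u) w) ` (?U \<times> Bset k))" using units_img by simp
    also have "\<dots> = card (?U \<times> Bset k)" by (rule card_image[OF units_bij[of "Bset k" k]]) simp
    also have "\<dots> = card ?U * card (Bset k)" by (rule card_cartesian_product)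
    finally show ?thesis .
  qed
  have KF: "{v \<in> Fset k. dot k l v = 0} = K0 - K1" unfolding FV K0_def K1_def by auto
  have K1K0: "K1 \<subseteq> K0" unfolding K0_def K1_def by auto
  have finK1: "finite K1" unfolding K1_def by (rule finite_subset[OF _ finD1]) auto
  have cKF: "card {v \<in> Fset k. dot k l v = 0} = card K0 - card K1"
    unfolding KF by (rule card_Diff_subset[OF finK1 K1K0])
  have cKF2: "card {v \<in> Fset k. dot k l v = 0} = card ?U * card ?Z"
  proof -
    have "card {v \<in> Fset k. dot k l v = 0} = card ((\<lambda>(u, w). map ((*) u) w) ` (?U \<times> ?Z))"
      using units_img_ker by simp
    also have "\<dots> = card (?U \<times> ?Z)" by (rule card_image[OF units_bij[of _ k]]) auto
    also have "\<dots> = card ?U * card ?Z" by (rule card_cartesian_product)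
    finally show ?thesis .
  qed
  have ZB: "?Z \<subseteq> Bset k" by auto
  have finZ: "finite ?Z" using finB by simp
  have W: "{w \<in> Bset k. dot k l w \<noteq> 0} = Bset k - ?Z" by auto
  have cW: "card {w \<in> Bset k. dot k l w \<noteq> 0} = card (Bset k) - card ?Z"
    unfolding W by (rule card_Diff_subset[OF finZ ZB])
  have ZleB: "card ?Z \<le> card (Bset k)" by (rule card_mono[OF finB ZB])
  have D1leV: "card ?D1 \<le> card ?V" by (rule card_mono[OF finV D1V])
  have K1leK0: "card K1 \<le> card K0" by (rule card_mono) (use K0_def finV K1K0 in auto)
  define Q where "Q = real q"
  have Q2: "Q \<ge> 2" unfolding Q_def using q2' by simp
  have qle: "q ^ (s - 1) \<le> q ^ s" using q2' by (intro power_increasing) auto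
  have cUr: "real (card ?U) = Q ^ s - Q ^ (s - 1)"
    using card_U qle unfolding Q_def q_def by (simp add: of_nat_diff)
  have eB: "(Q ^ s - Q ^ (s - 1)) * real (card (Bset k)) = Q ^ (s * k) - Q ^ ((s - 1) * k)"
  proof -
    have "real (card ?U) * real (card (Bset k)) = real (card ?V) - real (card ?D1)"
      using cF cF2 D1leV by (simp add: of_nat_diff flip: of_nat_mult)
    thus ?thesis unfolding cUr cardV cardD1 Q_def by (simp add: power_mult)
  qed
  have eZ: "(Q ^ s - Q ^ (s - 1)) * real (card ?Z) = Q ^ (s * (k - 1) + t) - Q ^ ((s - 1) * (k - 1) + t)"
  proof -
    have "real (card ?U) * real (card ?Z) = real (card K0) - real (card K1)"
      using cKF cKF2 K1leK0 by (simp add: of_nat_diff flip: of_nat_mult)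
    thus ?thesis unfolding cUr cK0 cK1 Q_def by simp
  qed
  have "real (card (Bset k)) - real (card ?Z) =
        Q ^ ((s - 1) * (k - 1)) * (Q ^ k - 1) / (Q - 1)
          - Q ^ t * (Q ^ ((s - 1) * (k - 1 - 1)) * (Q ^ (k - 1) - 1) / (Q - 1))"
    by (rule final_alg[OF Q2 s1 k2 eB eZ])
  thus ?thesis unfolding cW L_beta_def using ZleB unfolding Q_def q_def by (simp add: of_nat_diff)
qed

end

context cr begin

lemma dvd_pow_bound: "y \<noteq> 0 \<Longrightarrow> gam ^ m dvd y \<Longrightarrow> m < s"
proof (rule ccontr)
  assume "y \<noteq> 0" "gam ^ m dvd y" "\<not> m < s"
  hence "gam ^ m = 0" using pow_ge by simp
  thus False using \<open>y \<noteq> 0\<close> \<open>gam ^ m dvd y\<close> by simp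
qed

lemma nu_ge: assumes "gam ^ t dvd y" shows "enat t \<le> nu gam y"
proof (cases "y = 0")
  case True thus ?thesis by (simp add: nu_def)
next
  case False
  define P where "P m \<longleftrightarrow> (\<exists>b. b dvd 1 \<and> y = gam ^ m * b)" for m
  define m where "m = (GREATEST m. gam ^ m dvd y)"
  have bnd: "\<forall>m'. gam ^ m' dvd y \<longrightarrow> m' \<le> s" using dvd_pow_bound[OF False] less_imp_le by blast
  have m: "gam ^ m dvd y" unfolding m_def by (rule GreatestI_nat[of _ 0 s]) (use bnd in auto)
  have tm: "t \<le> m" unfolding m_def by (rule Greatest_le_nat[of _ t s]) (use assms bnd in auto)
  have nm: "\<not> gam ^ Suc m dvd y"
  proof
    assume "gam ^ Suc m dvd y"
    hence "Suc m \<le> m" using Greatest_le_nat[of "\<lambda>m. gam ^ m dvd y" "Suc m" s] bnd unfolding m_def[symmetric] by blast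
    thus False by simp
  qed
  obtain b where b: "y = gam ^ m * b" using m unfolding dvd_def by blast
  have "b dvd 1"
  proof (rule ccontr)
    assume "\<not> b dvd 1"
    hence "gam dvd b" by (rule nonunit_dvd)
    then obtain c where "b = gam * c" unfolding dvd_def by blast
    hence "y = gam ^ Suc m * c" using b by (simp add: mult_ac)
    thus False using nm by simp
  qed
  hence Pm: "P m" unfolding P_def using b by blast
  have "(GREATEST m. P m) = m"
  proof (rule Greatest_equality)
    show "P m" by (rule Pm)
    fix m' assume "P m'"
    hence "gam ^ m' dvd y" unfolding P_def by auto
    thus "m' \<le> m" unfolding m_def by (intro Greatest_le_nat[of _ m' s]) (use bnd in auto)
  qed
  hence "nu gam y = enat m" unfolding nu_def P_def using False by simp
  thus ?thesis using tm by simp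
qed

lemma nu_exact: assumes "t < s" "y = gam ^ t * u" "u dvd 1" shows "nu gam y = enat t"
proof -
  obtain v where v: "1 = u * v" using assms(3) unfolding dvd_def by blast
  have ynz: "y \<noteq> 0"
  proof
    assume "y = 0"
    have "gam ^ t = (gam ^ t * u) * v" using v by (simp add: mult.assoc)
    hence "gam ^ t = y * v" using assms(2) by simp
    thus False using \<open>y = 0\<close> pow_ne0[OF assms(1)] by simp
  qed
  have "(GREATEST m. \<exists>b. b dvd 1 \<and> y = gam ^ m * b) = t"
  proof (rule Greatest_equality)
    show "\<exists>b. b dvd 1 \<and> y = gam ^ t * b" using assms by blast
    fix m' assume "\<exists>b. b dvd 1 \<and> y = gam ^ m' * b"
    then obtain b where b: "b dvd 1" "y = gam ^ m' * b" by blast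
    show "m' \<le> t"
    proof (rule ccontr)
      assume "\<not> m' \<le> t"
      hence "Suc t \<le> m'" by simp
      hence "gam ^ Suc t dvd gam ^ m'" by (rule le_imp_power_dvd)
      hence "gam ^ Suc t dvd gam ^ t * u" using b assms(2) by (metis dvd_mult2)
      hence "gam dvd u" by (rule K[OF assms(1)])
      thus False using assms(3) unit_ndvd by blast
    qed
  qed
  thus ?thesis unfolding nu_def using ynz by simp
qed

lemma main:
  assumes k2: "2 \<le> k" and c: "c \<in> S_beta gam s T k" and cnz: "c \<noteq> replicate (length c) 0"
  shows "real (w_H c) = L_beta (length T) s k
           - real (length T) ^ the_enat (nu_vec gam c) * L_beta (length T) s (k - 1)"
proof -
  obtain l where cl: "c = map (\<lambda>col. \<Sum>i<k. l i * col ! i) (G_beta gam s T k)"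
    using c unfolding S_beta_def row_span_def by blast
  hence cl': "c = map (dot k l) (G_beta gam s T k)" unfolding dot_def by simp
  obtain n where kn: "k = Suc n" using k2 by (cases k) auto
  have G: "distinct (G_beta gam s T k)" "set (G_beta gam s T k) = Bset k"
    using Gbeta_prop[of n] kn by auto
  have wH: "w_H c = card {w \<in> Bset k. dot k l w \<noteq> 0}"
  proof -
    have "w_H c = length (filter (\<lambda>w. dot k l w \<noteq> 0) (G_beta gam s T k))"
      unfolding w_H_def cl' by (simp add: filter_map comp_def)
    also have "\<dots> = card (set (filter (\<lambda>w. dot k l w \<noteq> 0) (G_beta gam s T k)))"
      using distinct_card[OF distinct_filter[OF G(1)], of "\<lambda>w. dot k l w \<noteq> 0"] by simp
    also have "\<dots> = card {w \<in> Bset k. dot k l w \<noteq> 0}" using G(2) by simp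
    finally show ?thesis .
  qed
  have setc: "set c = dot k l ` Bset k" using cl' G(2) by simp
  have lnz: "\<exists>i<k. l i \<noteq> 0"
  proof (rule ccontr)
    assume "\<not> (\<exists>i<k. l i \<noteq> 0)"
    hence "\<forall>w. dot k l w = 0" unfolding dot_def by simp
    hence "dot k l = (\<lambda>_. 0)" by (intro ext) simp
    hence "c = replicate (length c) 0" unfolding cl' by (simp add: map_replicate_const)
    thus False using cnz by simp
  qed
  then obtain i0 where i0: "i0 < k" "l i0 \<noteq> 0" by blast
  define t where "t = (GREATEST m. \<forall>i<k. gam ^ m dvd l i)"
  have bnd: "\<forall>m. (\<forall>i<k. gam ^ m dvd l i) \<longrightarrow> m \<le> s"
    using dvd_pow_bound[OF i0(2)] i0(1) less_imp_le by blast
  have dv: "\<forall>i<k. gam ^ t dvd l i" unfolding t_def by (rule GreatestI_nat[of _ 0 s]) (use bnd in auto)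
  have ts: "t < s" using dvd_pow_bound[OF i0(2)] dv i0(1) by blast
  have "\<not> (\<forall>i<k. gam ^ Suc t dvd l i)"
  proof
    assume "\<forall>i<k. gam ^ Suc t dvd l i"
    hence "Suc t \<le> t" using Greatest_le_nat[of "\<lambda>m. \<forall>i<k. gam ^ m dvd l i" "Suc t" s] bnd unfolding t_def[symmetric] by blast
    thus False by simp
  qed
  then obtain p where p: "p < k" "\<not> gam ^ Suc t dvd l p" by blast
  obtain u where lp: "l p = gam ^ t * u" using dv p(1) unfolding dvd_def by blast
  have u: "u dvd 1"
  proof (rule ccontr)
    assume "\<not> u dvd 1"
    hence "gam dvd u" by (rule nonunit_dvd)
    then obtain c where "u = gam * c" unfolding dvd_def by blast
    hence "l p = gam ^ Suc t * c" using lp by (simp add: mult_ac)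
    thus False using p(2) by simp
  qed
  have nuv: "nu_vec gam c = enat t"
  proof -
    have ep: "(replicate k 0)[p := 1] \<in> Bset k"
    proof -
      have "(replicate k 0)[p := 1] ! p = 1" using p by simp
      moreover have "\<forall>j<p. gam dvd (replicate k 0)[p := 1] ! j" using p by simp
      ultimately show ?thesis unfolding Bset_def using p by auto
    qed
    have lpin: "l p \<in> set c" unfolding setc
      using ep dot_single[OF p(1), of l 1] by (intro rev_image_eqI[where x="(replicate k 0)[p := 1]"]) simp_all
    have nlp: "nu gam (l p) = enat t" by (rule nu_exact[OF ts lp u])
    have ge: "\<forall>x\<in>nu gam ` set c. enat t \<le> x"
    proof
      fix x assume "x \<in> nu gam ` set c"
      then obtain y where y: "y \<in> set c" "x = nu gam y" by blast
      then obtain w where "y = dot k l w" using setc by blast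
      moreover have "gam ^ t dvd dot k l w" unfolding dot_def by (rule dvd_sum) (use dv in auto)
      ultimately show "enat t \<le> x" using nu_ge y(2) by simp
    qed
    show ?thesis unfolding nu_vec_def
    proof (rule Min_eqI)
      show "finite (nu gam ` set c)" by simp
      show "\<And>x. x \<in> nu gam ` set c \<Longrightarrow> enat t \<le> x" using ge by blast
      show "enat t \<in> nu gam ` set c" using lpin nlp by (metis image_eqI)
    qed
  qed
  show ?thesis unfolding wH nuv the_enat.simps
    by (rule count_main[OF k2 ts dv p(1) lp u])
qed

end

theorem corollary3p21:
  fixes gam :: "'a::{comm_ring_1,finite}" and s k :: nat and T :: "'a list" and c :: "'a list"
  assumes "chain_ring_data gam s T"
    and "2 \<le> k"
    and "c \<in> S_beta gam s T k"
    and "c \<noteq> replicate (length c) 0"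
  shows "real (w_H c) = L_beta (length T) s k
           - real (length T) ^ the_enat (nu_vec gam c) * L_beta (length T) s (k - 1)"
proof -
  interpret cr gam s T by unfold_locales (rule assms(1))
  show ?thesis by (rule main[OF assms(2-4)])
qed

end
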